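(* Let $\Gamma=(V,E)$ be a graph, for each $v\in V$ let $C_v$ be a right cancellative monoid, and let $C=\Gamma_{v\in V}C_v$. Let $c$ be a non-unit of $C_v$ and $d$ a non-unit of $C_u$, where $(u,v)\in E$. Then $Cc\cap Cd=Ccd$.
   Context: A graph $\Gamma=(V,E)$ has vertex set $V$ and irreflexive symmetric edge relation $E$. The graph product $\Gamma_{v\in V}C_v$ of pairwise disjoint monoids $C_v$ is the quotient of their free product by the congruence generated by all pairs $(mn,nm)$ with $m\in C_u$, $n\in C_v$, $(u,v)\in E$; each $C_v$ is identified with its image in $C$. *)

theory Defs
  imports "HOL-Algebra.Group"
begin

definition is_graph :: "'v set \<Rightarrow> ('v \<times> 'v) set \<Rightarrow> bool" where
  "is_graph V E \<longleftrightarrow> E \<subseteq> V \<times> V \<and> (\<forall>v. (v, v) \<notin> E) \<and> (\<forall>u v. (u, v) \<in> E \<longrightarrow> (v, u) \<in> E)"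

definition right_cancellative_monoid :: "('a, 'b) monoid_scheme \<Rightarrow> bool" where
  "right_cancellative_monoid M \<longleftrightarrow> monoid M \<and>
     (\<forall>a\<in>carrier M. \<forall>b\<in>carrier M. \<forall>c\<in>carrier M. a \<otimes>\<^bsub>M\<^esub> c = b \<otimes>\<^bsub>M\<^esub> c \<longrightarrow> a = b)"

text \<open>Words of the free product: lists of letters (v, a) with a in C_v; tagging by the
  vertex makes the monoids pairwise disjoint.\<close>
definition gp_words :: "('v \<Rightarrow> 'a monoid) \<Rightarrow> 'v set \<Rightarrow> ('v \<times> 'a) list set" where
  "gp_words C V = {w. \<forall>(v, a)\<in>set w. v \<in> V \<and> a \<in> carrier (C v)}"

inductive gp_eq :: "('v \<Rightarrow> 'a monoid) \<Rightarrow> 'v set \<Rightarrow> ('v \<times> 'v) set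
    \<Rightarrow> ('v \<times> 'a) list \<Rightarrow> ('v \<times> 'a) list \<Rightarrow> bool"
  for C V E where
  gp_refl: "w \<in> gp_words C V \<Longrightarrow> gp_eq C V E w w"
| gp_sym: "gp_eq C V E w w' \<Longrightarrow> gp_eq C V E w' w"
| gp_trans: "gp_eq C V E w w' \<Longrightarrow> gp_eq C V E w' w'' \<Longrightarrow> gp_eq C V E w w''"
| gp_mult: "xs \<in> gp_words C V \<Longrightarrow> ys \<in> gp_words C V \<Longrightarrow> v \<in> V \<Longrightarrow>
     a \<in> carrier (C v) \<Longrightarrow> b \<in> carrier (C v) \<Longrightarrow>
     gp_eq C V E (xs @ [(v, a), (v, b)] @ ys) (xs @ [(v, a \<otimes>\<^bsub>C v\<^esub> b)] @ ys)"
| gp_unit: "xs \<in> gp_words C V \<Longrightarrow> ys \<in> gp_words C V \<Longrightarrow> v \<in> V \<Longrightarrow>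
     gp_eq C V E (xs @ [(v, \<one>\<^bsub>C v\<^esub>)] @ ys) (xs @ ys)"
| gp_comm: "xs \<in> gp_words C V \<Longrightarrow> ys \<in> gp_words C V \<Longrightarrow> (u, v) \<in> E \<Longrightarrow>
     a \<in> carrier (C u) \<Longrightarrow> b \<in> carrier (C v) \<Longrightarrow>
     gp_eq C V E (xs @ [(u, a), (v, b)] @ ys) (xs @ [(v, b), (u, a)] @ ys)"

definition gp_rel :: "('v \<Rightarrow> 'a monoid) \<Rightarrow> 'v set \<Rightarrow> ('v \<times> 'v) set
    \<Rightarrow> (('v \<times> 'a) list \<times> ('v \<times> 'a) list) set" where
  "gp_rel C V E = {(w, w'). gp_eq C V E w w'}"

definition graph_product :: "('v \<Rightarrow> 'a monoid) \<Rightarrow> 'v set \<Rightarrow> ('v \<times> 'v) set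
    \<Rightarrow> ('v \<times> 'a) list set monoid" where
  "graph_product C V E =
     \<lparr> carrier = gp_words C V // gp_rel C V E,
       mult = (\<lambda>X Y. \<Union>x\<in>X. \<Union>y\<in>Y. gp_rel C V E `` {x @ y}),
       one = gp_rel C V E `` {[]} \<rparr>"

definition gp_inj :: "('v \<Rightarrow> 'a monoid) \<Rightarrow> 'v set \<Rightarrow> ('v \<times> 'v) set
    \<Rightarrow> 'v \<Rightarrow> 'a \<Rightarrow> ('v \<times> 'a) list set" where
  "gp_inj C V E v a = gp_rel C V E `` {[(v, a)]}"

end

theory Submission
  imports Defs
begin

locale GP =
  fixes C :: "'v \<Rightarrow> 'a monoid" and V :: "'v set" and E :: "('v \<times> 'v) set"
  assumes graph: "is_graph V E"
    and rc: "\<And>v. v \<in> V \<Longrightarrow> right_cancellative_monoid (C v)"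
begin

lemma Esym: "(a, b) \<in> E \<Longrightarrow> (b, a) \<in> E"
  using graph unfolding is_graph_def by blast
lemma Eirr[simp]: "(a, a) \<notin> E"
  using graph unfolding is_graph_def by blast
lemma EV: "(a, b) \<in> E \<Longrightarrow> a \<in> V \<and> b \<in> V"
  using graph unfolding is_graph_def by blast
lemma mon: "s \<in> V \<Longrightarrow> monoid (C s)"
  using rc unfolding right_cancellative_monoid_def by blast
lemma rcan: "s \<in> V \<Longrightarrow> a \<in> carrier (C s) \<Longrightarrow> b \<in> carrier (C s) \<Longrightarrow> x \<in> carrier (C s)
   \<Longrightarrow> a \<otimes>\<^bsub>C s\<^esub> x = b \<otimes>\<^bsub>C s\<^esub> x \<Longrightarrow> a = b"
  using rc unfolding right_cancellative_monoid_def by blast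

lemma unit_right: assumes "s \<in> V" "h \<in> carrier (C s)" "g \<in> carrier (C s)"
  and "h \<otimes>\<^bsub>C s\<^esub> g = \<one>\<^bsub>C s\<^esub>" shows "g \<in> Units (C s)"
proof -
  interpret monoid "C s" using mon assms(1) .
  have "(g \<otimes>\<^bsub>C s\<^esub> h) \<otimes>\<^bsub>C s\<^esub> g = g \<otimes>\<^bsub>C s\<^esub> (h \<otimes>\<^bsub>C s\<^esub> g)"
    using assms(2,3) by (rule m_assoc[OF assms(3)])
  also have "\<dots> = \<one>\<^bsub>C s\<^esub> \<otimes>\<^bsub>C s\<^esub> g" using assms(3,4) by simp
  finally have "g \<otimes>\<^bsub>C s\<^esub> h = \<one>\<^bsub>C s\<^esub>"
    using rcan[OF assms(1)] assms(2,3) by (meson m_closed one_closed)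
  thus ?thesis using assms unfolding Units_def by blast
qed

fun insp :: "'v \<Rightarrow> 'a \<Rightarrow> ('v \<times> 'a) list \<Rightarrow> ('v \<times> 'a) list" where
  "insp z g [] = [(z, g)]"
| "insp z g ((s, h) # L) = (if s = z then (if h \<otimes>\<^bsub>C z\<^esub> g = \<one>\<^bsub>C z\<^esub> then L else (z, h \<otimes>\<^bsub>C z\<^esub> g) # L)
     else if (s, z) \<in> E then (s, h) # insp z g L else (z, g) # (s, h) # L)"

definition ins :: "'v \<Rightarrow> 'a \<Rightarrow> ('v \<times> 'a) list \<Rightarrow> ('v \<times> 'a) list" where
  "ins z g L = (if g = \<one>\<^bsub>C z\<^esub> then L else insp z g L)"

inductive tr :: "('v \<times> 'a) list \<Rightarrow> ('v \<times> 'a) list \<Rightarrow> bool" where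
  tr_refl: "tr L L"
| tr_sym: "tr L L' \<Longrightarrow> tr L' L"
| tr_trans: "tr L L' \<Longrightarrow> tr L' L'' \<Longrightarrow> tr L L''"
| tr_swap: "(fst p, fst q) \<in> E \<Longrightarrow> tr (P @ [p, q] @ S) (P @ [q, p] @ S)"

lemma tr_swap0: "(fst p, fst q) \<in> E \<Longrightarrow> tr (p # q # S) (q # p # S)"
  using tr_swap[of p q "[]" S] by simp

lemma tr_cons: "tr L L' \<Longrightarrow> tr (x # L) (x # L')"
proof (induction rule: tr.induct)
  case (tr_swap p q P S)
  then show ?case using tr.tr_swap[of p q "x # P" S] by simp
next
  case (tr_refl L) show ?case by (rule tr.tr_refl)
next
  case (tr_sym L L') show ?case by (rule tr.tr_sym[OF tr_sym.IH])
next
  case (tr_trans L L' L'') show ?case by (rule tr.tr_trans[OF tr_trans.IH])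
qed

fun reach :: "'v \<Rightarrow> ('v \<times> 'a) list \<Rightarrow> bool" where
  "reach z [] = False"
| "reach z ((s, h) # L) = (s = z \<or> ((s, z) \<in> E \<and> reach z L))"

fun reduced :: "('v \<times> 'a) list \<Rightarrow> bool" where
  "reduced [] = True"
| "reduced ((s, h) # L) = (\<not> reach s L \<and> reduced L)"

definition wf :: "('v \<times> 'a) list \<Rightarrow> bool" where
  "wf L = (\<forall>(s, h) \<in> set L. s \<in> V \<and> h \<in> carrier (C s) \<and> h \<noteq> \<one>\<^bsub>C s\<^esub>)"

definition nf :: "('v \<times> 'a) list \<Rightarrow> ('v \<times> 'a) list" where
  "nf w = foldl (\<lambda>L (z, g). ins z g L) [] w"

fun Qd :: "'v \<Rightarrow> 'a \<Rightarrow> ('v \<times> 'a) list \<Rightarrow> bool" where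
  "Qd u d [] = False"
| "Qd u d ((s, h) # L) = ((s = u \<and> (\<exists>k \<in> carrier (C u). h = k \<otimes>\<^bsub>C u\<^esub> d)) \<or> ((s, u) \<in> E \<and> Qd u d L))"

lemma insp_swap:
  assumes "(fst p, fst q) \<in> E"
  shows "tr (insp z g (P @ [p, q] @ S)) (insp z g (P @ [q, p] @ S))"
proof (induction P)
  case Nil
  obtain s1 h1 s2 h2 where pq: "p = (s1, h1)" "q = (s2, h2)" by fastforce
  have e: "(s1, s2) \<in> E" "(s2, s1) \<in> E" using assms pq Esym by auto
  have ne: "s1 \<noteq> s2" "s2 \<noteq> s1" using e(1) by auto
  show ?case
  proof (cases "s1 = z")
    case True
    then show ?thesis using e pq ne by (simp add: tr_refl tr_swap0)
  next
    case f1: False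
    show ?thesis
    proof (cases "s2 = z")
      case True
      then show ?thesis using e pq f1 ne by (simp add: tr_refl tr_swap0)
    next
      case f2: False
      have A: "tr ((s1,h1) # (z, g) # (s2, h2) # S) ((z, g) # (s2, h2) # (s1, h1) # S)"
        if "(s1, z) \<in> E"
      proof -
        have 1: "tr ((s1,h1) # (z, g) # (s2, h2) # S) ((z, g) # (s1,h1) # (s2, h2) # S)"
          using tr_swap0[of "(s1,h1)" "(z,g)"] that by simp
        have 2: "tr ((z, g) # (s1,h1) # (s2, h2) # S) ((z, g) # (s2,h2) # (s1, h1) # S)"
          using tr_cons[OF tr_swap0[of "(s1,h1)" "(s2,h2)"]] e by simp
        show ?thesis using tr_trans[OF 1 2] .
      qed
      have B: "tr ((z, g) # (s1,h1) # (s2, h2) # S) ((s2,h2) # (z, g) # (s1, h1) # S)"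
        if "(s2, z) \<in> E"
      proof -
        have 2: "tr ((z, g) # (s1,h1) # (s2, h2) # S) ((z, g) # (s2,h2) # (s1, h1) # S)"
          using tr_cons[OF tr_swap0[of "(s1,h1)" "(s2,h2)"]] e by simp
        have 1: "tr ((z, g) # (s2,h2) # (s1, h1) # S) ((s2,h2) # (z, g) # (s1, h1) # S)"
          using tr_swap0[of "(z,g)" "(s2,h2)"] that Esym by simp
        show ?thesis using tr_trans[OF 2 1] .
      qed
      show ?thesis
      proof (cases "(s1, z) \<in> E")
        case True
        then show ?thesis
        proof (cases "(s2, z) \<in> E")
          case True
          then show ?thesis using `(s1, z) \<in> E` e pq f1 f2 by (simp add: tr_swap0)
        next
          case False
          then show ?thesis using `(s1, z) \<in> E` e pq f1 f2 A by simp
        qed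
      next
        case False
        then show ?thesis
        proof (cases "(s2, z) \<in> E")
          case True
          then show ?thesis using `(s1, z) \<notin> E` e pq f1 f2 B by simp
        next
          case False
          then show ?thesis using `(s1, z) \<notin> E` e pq f1 f2 by (simp add: tr_swap0 tr_cons)
        qed
      qed
    qed
  qed
next
  case (Cons a P)
  obtain s h where a: "a = (s, h)" by fastforce
  have sw: "tr (x # P @ [p, q] @ S) (x # P @ [q, p] @ S)" for x
    using tr_swap[of p q "x # P" S] assms by simp
  have sw0: "tr (P @ [p, q] @ S) (P @ [q, p] @ S)"
    using tr_swap[of p q P S] assms by simp
  show ?case using Cons a sw sw0 by (simp add: tr_refl tr_cons)
qed

lemma ins_tr: "tr L L' \<Longrightarrow> tr (ins z g L) (ins z g L')"
proof (induction rule: tr.induct)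
  case (tr_refl L) show ?case by (rule tr.tr_refl)
next
  case (tr_sym L L') show ?case by (rule tr.tr_sym[OF tr_sym.IH])
next
  case (tr_trans L L' L'') show ?case by (rule tr.tr_trans[OF tr_trans.IH])
next
  case (tr_swap p q P S)
  then show ?case unfolding ins_def using insp_swap[OF tr_swap] tr.tr_swap[OF tr_swap] by simp
qed

lemma foldl_tr: "tr L L' \<Longrightarrow> tr (foldl (\<lambda>L (z, g). ins z g L) L ys) (foldl (\<lambda>L (z, g). ins z g L) L' ys)"
proof (induction ys arbitrary: L L')
  case Nil then show ?case by simp
next
  case (Cons y ys)
  obtain z g where y: "y = (z, g)" by fastforce
  show ?case using Cons.IH[OF ins_tr[OF Cons.prems, of z g]] y by simp
qed

lemma reach_insp: "(z, s) \<in> E \<Longrightarrow> reach s (insp z g L) = reach s L"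
proof (induction L)
  case Nil
  then have "z \<noteq> s" by auto
  then show ?case using Nil by simp
next
  case (Cons a L)
  obtain t h where a: "a = (t, h)" by fastforce
  have "z \<noteq> s" using Cons.prems by auto
  then show ?case using Cons a by auto
qed

lemma reach_ins: "(z, s) \<in> E \<Longrightarrow> reach s (ins z g L) = reach s L"
  unfolding ins_def using reach_insp by simp

lemma reduced_insp: "reduced L \<Longrightarrow> reduced (insp z g L)"
proof (induction L)
  case Nil then show ?case by simp
next
  case (Cons a L)
  obtain t h where a: "a = (t, h)" by fastforce
  show ?case
  proof (cases "t = z")
    case True then show ?thesis using Cons a by simp
  next
    case False
    show ?thesis
    proof (cases "(t, z) \<in> E")
      case True
      then show ?thesis using Cons a False reach_insp[OF Esym[OF True]] by simp
    next
      case f2: False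
      then show ?thesis using Cons a False by simp
    qed
  qed
qed

lemma reduced_ins: "reduced L \<Longrightarrow> reduced (ins z g L)"
  unfolding ins_def using reduced_insp by simp

lemma wf_insp: assumes "z \<in> V" "g \<in> carrier (C z)" "g \<noteq> \<one>\<^bsub>C z\<^esub>"
  shows "wf L \<Longrightarrow> wf (insp z g L)"
proof (induction L)
  case Nil then show ?case using assms by (simp add: wf_def)
next
  case (Cons a L)
  obtain t h where a: "a = (t, h)" by fastforce
  interpret monoid "C z" using mon assms(1) .
  have w: "wf L" "t \<in> V" "h \<in> carrier (C t)" "h \<noteq> \<one>\<^bsub>C t\<^esub>" using Cons.prems a by (auto simp: wf_def)
  show ?case
  proof (cases "t = z")
    case True then show ?thesis using w assms a by (auto simp: wf_def)
  next
    case False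
    then show ?thesis using Cons.IH w assms a by (auto simp: wf_def)
  qed
qed

lemma wf_ins: "z \<in> V \<Longrightarrow> g \<in> carrier (C z) \<Longrightarrow> wf L \<Longrightarrow> wf (ins z g L)"
  unfolding ins_def using wf_insp by simp

lemma insp_none: "\<not> reach z B \<Longrightarrow> tr (insp z g B) ((z, g) # B)"
proof (induction B)
  case Nil then show ?case by (simp add: tr_refl)
next
  case (Cons a B)
  obtain t h where a: "a = (t, h)" by fastforce
  show ?case
  proof (cases "(t, z) \<in> E")
    case True
    have t: "t \<noteq> z" using True by auto
    have 1: "tr ((t, h) # insp z g B) ((t, h) # (z, g) # B)"
      using tr_cons Cons True a by simp
    have 2: "tr ((t, h) # (z, g) # B) ((z, g) # (t, h) # B)"
      using tr_swap0[of "(t,h)" "(z,g)"] True by simp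
    show ?thesis using tr_trans[OF 1 2] True t a by simp
  next
    case False
    then show ?thesis using Cons a by (simp add: tr_refl)
  qed
qed

lemma insp_mult:
  assumes zV: "z \<in> V" and ab: "a \<in> carrier (C z)" "b \<in> carrier (C z)"
    and a1: "a \<noteq> \<one>\<^bsub>C z\<^esub>" and b1: "b \<noteq> \<one>\<^bsub>C z\<^esub>"
  shows "wf L \<Longrightarrow> reduced L \<Longrightarrow> tr (insp z b (insp z a L)) (ins z (a \<otimes>\<^bsub>C z\<^esub> b) L)"
proof (induction L)
  interpret monoid "C z" using mon zV .
  case Nil then show ?case by (simp add: ins_def tr_refl)
next
  interpret monoid "C z" using mon zV .
  case (Cons x L)
  obtain s h where x: "x = (s, h)" by fastforce
  have w: "wf L" "s \<in> V" "h \<in> carrier (C s)" "h \<noteq> \<one>\<^bsub>C s\<^esub>" using Cons.prems x by (auto simp: wf_def)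
  have r: "reduced L" "\<not> reach s L" using Cons.prems x by auto
  show ?case
  proof (cases "s = z")
    case True
    have hc: "h \<in> carrier (C z)" "h \<noteq> \<one>\<^bsub>C z\<^esub>" using w True by auto
    have as: "h \<otimes>\<^bsub>C z\<^esub> (a \<otimes>\<^bsub>C z\<^esub> b) = (h \<otimes>\<^bsub>C z\<^esub> a) \<otimes>\<^bsub>C z\<^esub> b"
      using hc ab by (simp add: m_assoc)
    show ?thesis
    proof (cases "h \<otimes>\<^bsub>C z\<^esub> a = \<one>\<^bsub>C z\<^esub>")
      case ha: True
      have hb: "h \<otimes>\<^bsub>C z\<^esub> (a \<otimes>\<^bsub>C z\<^esub> b) = b" using as ha ab by simp
      have "tr (insp z b L) ((z, b) # L)" using insp_none r True by simp
      moreover have "ins z (a \<otimes>\<^bsub>C z\<^esub> b) ((s, h) # L) = (z, b) # L"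
        using hb True b1 hc by (auto simp: ins_def)
      ultimately show ?thesis using ha True x by simp
    next
      case ha: False
      show ?thesis using ha True x as hc by (auto simp: ins_def tr_refl)
    qed
  next
    case False
    show ?thesis
    proof (cases "(s, z) \<in> E")
      case True
      have "ins z (a \<otimes>\<^bsub>C z\<^esub> b) ((s, h) # L) = (s, h) # ins z (a \<otimes>\<^bsub>C z\<^esub> b) L"
        using True False by (simp add: ins_def)
      then show ?thesis using Cons.IH[OF w(1) r(1)] True False x tr_cons by simp
    next
      case f2: False
      then show ?thesis using False x by (auto simp: ins_def tr_refl)
    qed
  qed
qed

lemma ins_mult:
  assumes zV: "z \<in> V" and ab: "a \<in> carrier (C z)" "b \<in> carrier (C z)"
    and "wf L" "reduced L"
  shows "tr (ins z b (ins z a L)) (ins z (a \<otimes>\<^bsub>C z\<^esub> b) L)"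
proof -
  interpret monoid "C z" using mon zV .
  show ?thesis
  proof (cases "a = \<one>\<^bsub>C z\<^esub>")
    case True then show ?thesis using ab by (simp add: ins_def tr_refl)
  next
    case a1: False
    show ?thesis
    proof (cases "b = \<one>\<^bsub>C z\<^esub>")
      case True then show ?thesis using ab a1 by (simp add: ins_def tr_refl)
    next
      case False
      then show ?thesis using insp_mult[OF zV ab a1 False assms(4,5)] a1 by (simp add: ins_def)
    qed
  qed
qed

lemma insp_comm:
  assumes zt: "(z, t) \<in> E"
  shows "tr (insp t b (insp z a L)) (insp z a (insp t b L))"
proof (induction L)
  have ne: "z \<noteq> t" "t \<noteq> z" "(t, z) \<in> E" using zt Esym by auto
  case Nil
  then show ?case using ne zt tr_swap0[of "(z,a)" "(t,b)" "[]"] by simp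
next
  have ne: "z \<noteq> t" "t \<noteq> z" "(t, z) \<in> E" using zt Esym by auto
  case (Cons x L)
  obtain s h where x: "x = (s, h)" by fastforce
  consider "s = z" | "s = t" | "s \<noteq> z" "s \<noteq> t" by blast
  then show ?case
  proof cases
    case 1 then show ?thesis using x ne zt by (simp add: tr_refl)
  next
    case 2 then show ?thesis using x ne zt by (simp add: tr_refl)
  next
    case 3
    have sw: "tr ((z, a) # (t, b) # (s, h) # L) ((t, b) # (z, a) # (s, h) # L)"
      using tr_swap0[of "(z,a)" "(t,b)"] zt by simp
    show ?thesis using 3 x ne zt sw Cons.IH by (simp add: tr_refl tr_cons)
  qed
qed

lemma ins_comm:
  assumes zt: "(z, t) \<in> E"
  shows "tr (ins t b (ins z a L)) (ins z a (ins t b L))"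
  unfolding ins_def using insp_comm[OF zt] by (simp add: tr_refl)

abbreviation "W \<equiv> gp_words C V"
abbreviation "geq \<equiv> gp_eq C V E"

lemma words_app[simp]: "xs @ ys \<in> W \<longleftrightarrow> xs \<in> W \<and> ys \<in> W"
  unfolding gp_words_def by auto
lemma words_cons[simp]: "(z, g) # ys \<in> W \<longleftrightarrow> z \<in> V \<and> g \<in> carrier (C z) \<and> ys \<in> W"
  unfolding gp_words_def by auto
lemma words_nil[simp]: "[] \<in> W"
  unfolding gp_words_def by auto

lemma geq_words: "geq w w' \<Longrightarrow> w \<in> W \<and> w' \<in> W"
proof (induction rule: gp_eq.induct)
  case (gp_mult xs ys v a b)
  then show ?case using monoid.m_closed[OF mon] by auto
next
  case (gp_unit xs ys v)
  then show ?case using monoid.one_closed[OF mon] by auto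
next
  case (gp_comm xs ys u v a b)
  then show ?case using EV by auto
qed auto

lemma geq_app_right: "geq w w' \<Longrightarrow> ys \<in> W \<Longrightarrow> geq (w @ ys) (w' @ ys)"
proof (induction rule: gp_eq.induct)
  case (gp_refl w) then show ?case by (simp add: gp_eq.gp_refl)
next
  case (gp_sym w w') then show ?case by (simp add: gp_eq.gp_sym)
next
  case (gp_trans w w' w'') then show ?case by (meson gp_eq.gp_trans)
next
  case (gp_mult xs ys0 v a b)
  then show ?case using gp_eq.gp_mult[where xs=xs and ys="ys0 @ ys" and v=v and a=a and b=b] by simp
next
  case (gp_unit xs ys0 v)
  then show ?case using gp_eq.gp_unit[where xs=xs and ys="ys0 @ ys" and v=v] by simp
next
  case (gp_comm xs ys0 u v a b)
  then show ?case using gp_eq.gp_comm[where xs=xs and ys="ys0 @ ys" and u=u and v=v and a=a and b=b] by simp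
qed

lemma geq_app_left: "geq w w' \<Longrightarrow> xs \<in> W \<Longrightarrow> geq (xs @ w) (xs @ w')"
proof (induction rule: gp_eq.induct)
  case (gp_refl w) then show ?case by (simp add: gp_eq.gp_refl)
next
  case (gp_sym w w') then show ?case by (simp add: gp_eq.gp_sym)
next
  case (gp_trans w w' w'') then show ?case by (meson gp_eq.gp_trans)
next
  case (gp_mult xs0 ys0 v a b)
  then show ?case using gp_eq.gp_mult[where xs="xs @ xs0" and ys=ys0 and v=v and a=a and b=b] by simp
next
  case (gp_unit xs0 ys0 v)
  then show ?case using gp_eq.gp_unit[where xs="xs @ xs0" and ys=ys0 and v=v] by simp
next
  case (gp_comm xs0 ys0 u v a b)
  then show ?case using gp_eq.gp_comm[where xs="xs @ xs0" and ys=ys0 and u=u and v=v and a=a and b=b] by simp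
qed

lemma geq_app: "geq a a' \<Longrightarrow> geq b b' \<Longrightarrow> geq (a @ b) (a' @ b')"
  by (meson geq_app_left geq_app_right geq_words gp_eq.gp_trans)

lemma nf_snoc[simp]: "nf (w @ [(z, g)]) = ins z g (nf w)"
  unfolding nf_def by simp

lemma nf_append: "nf (xs @ ys) = foldl (\<lambda>L (z, g). ins z g L) (nf xs) ys"
  unfolding nf_def by simp

lemma nf_inv: "w \<in> W \<Longrightarrow> wf (nf w) \<and> reduced (nf w)"
proof (induction w rule: rev_induct)
  case Nil then show ?case by (simp add: nf_def wf_def)
next
  case (snoc x w)
  obtain z g where x: "x = (z, g)" by fastforce
  show ?case using snoc x wf_ins reduced_ins by auto
qed

lemma nf_tr: "geq w w' \<Longrightarrow> tr (nf w) (nf w')"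
proof (induction rule: gp_eq.induct)
  case (gp_refl w) show ?case by (rule tr.tr_refl)
next
  case (gp_sym w w') show ?case by (rule tr.tr_sym[OF gp_sym.IH])
next
  case (gp_trans w w' w'') show ?case by (rule tr.tr_trans[OF gp_trans.IH])
next
  case (gp_mult xs ys v a b)
  have "tr (ins v b (ins v a (nf xs))) (ins v (a \<otimes>\<^bsub>C v\<^esub> b) (nf xs))"
    using ins_mult gp_mult nf_inv by blast
  then show ?case using foldl_tr by (simp add: nf_append)
next
  case (gp_unit xs ys v)
  then show ?case by (simp add: nf_append ins_def tr_refl)
next
  case (gp_comm xs ys u v a b)
  have "tr (ins v b (ins u a (nf xs))) (ins u a (ins v b (nf xs)))"
    using ins_comm gp_comm by blast
  then show ?case using foldl_tr by (simp add: nf_append)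
qed

lemma wf_words: "wf L \<Longrightarrow> rev L \<in> W"
  unfolding wf_def gp_words_def by auto

lemma denote_ins:
  assumes zV: "z \<in> V" and g: "g \<in> carrier (C z)"
  shows "wf L \<Longrightarrow> geq (rev L @ [(z, g)]) (rev (ins z g L))"
proof (cases "g = \<one>\<^bsub>C z\<^esub>")
  case True
  assume "wf L"
  then show ?thesis using gp_unit[where xs="rev L" and ys="[]" and v=z] True zV wf_words by (simp add: ins_def)
next
  case g1: False
  show "wf L \<Longrightarrow> geq (rev L @ [(z, g)]) (rev (ins z g L))"
  proof (induction L)
    case Nil then show ?case using g1 zV g by (simp add: ins_def gp_refl)
  next
    case (Cons x L)
    obtain s h where x: "x = (s, h)" by fastforce
    have w: "wf L" "s \<in> V" "h \<in> carrier (C s)" "h \<noteq> \<one>\<^bsub>C s\<^esub>" using Cons.prems x by (auto simp: wf_def)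
    have rw: "rev L \<in> W" using wf_words w(1) .
    show ?case
    proof (cases "s = z")
      case True
      have m: "geq (rev L @ [(z, h), (z, g)] @ []) (rev L @ [(z, h \<otimes>\<^bsub>C z\<^esub> g)] @ [])"
        using gp_mult[where xs="rev L" and ys="[]" and v=z and a=h and b=g] rw zV g w True by simp
      show ?thesis
      proof (cases "h \<otimes>\<^bsub>C z\<^esub> g = \<one>\<^bsub>C z\<^esub>")
        case True
        have "geq (rev L @ [(z, h \<otimes>\<^bsub>C z\<^esub> g)] @ []) (rev L @ [])"
          using gp_unit[where xs="rev L" and ys="[]" and v=z] True rw zV by simp
        then show ?thesis using m True `s = z` x g1 by (simp add: ins_def) (meson gp_trans)
      next
        case False
        then show ?thesis using m `s = z` x g1 by (simp add: ins_def)
      qed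
    next
      case sz: False
      show ?thesis
      proof (cases "(s, z) \<in> E")
        case True
        have c: "geq (rev L @ [(s, h), (z, g)] @ []) (rev L @ [(z, g), (s, h)] @ [])"
          using gp_comm[where xs="rev L" and ys="[]" and u=s and v=z and a=h and b=g] rw True g w by simp
        have ih: "geq (rev L @ [(z, g)]) (rev (insp z g L))"
          using Cons.IH[OF w(1)] g1 by (simp add: ins_def)
        have "geq (rev L @ [(z, g)] @ [(s, h)]) (rev (insp z g L) @ [(s, h)])"
          using geq_app_right[OF ih] w by simp
        then show ?thesis using c sz True x g1 by (simp add: ins_def) (meson gp_trans)
      next
        case False
        have "geq (rev L @ [(s, h), (z, g)]) (rev L @ [(s, h), (z, g)])"
          by (rule gp_refl) (use rw w zV g in simp)
        then show ?thesis using False sz x g1 by (simp add: ins_def)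
      qed
    qed
  qed
qed

lemma nf_geq: "w \<in> W \<Longrightarrow> geq w (rev (nf w))"
proof (induction w rule: rev_induct)
  case Nil then show ?case by (simp add: nf_def gp_refl)
next
  case (snoc x w)
  obtain z g where x: "x = (z, g)" by fastforce
  have w: "w \<in> W" "z \<in> V" "g \<in> carrier (C z)" using snoc x by auto
  have 1: "geq (w @ [(z, g)]) (rev (nf w) @ [(z, g)])"
    using geq_app_right[OF snoc.IH[OF w(1)]] w by simp
  have 2: "geq (rev (nf w) @ [(z, g)]) (rev (ins z g (nf w)))"
    using denote_ins w nf_inv by blast
  show ?case using gp_trans[OF 1 2] x by simp
qed

lemma Qd_swap: "(fst p, fst q) \<in> E \<Longrightarrow> Qd u d (P @ [p, q] @ S) = Qd u d (P @ [q, p] @ S)"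
proof (induction P)
  case Nil
  obtain s1 h1 s2 h2 where pq: "p = (s1, h1)" "q = (s2, h2)" by fastforce
  have e: "(s1, s2) \<in> E" "(s2, s1) \<in> E" "s1 \<noteq> s2" "s2 \<noteq> s1" using Nil pq Esym by auto
  then show ?case using pq by auto
next
  case (Cons a P)
  obtain s h where a: "a = (s, h)" by fastforce
  then show ?case using Cons by simp
qed

lemma Qd_tr: "tr L L' \<Longrightarrow> Qd u d L = Qd u d L'"
proof (induction rule: tr.induct)
  case (tr_swap p q P S)
  then show ?case by (rule Qd_swap)
qed auto

lemma Qd_insp: "(v, u) \<in> E \<Longrightarrow> Qd u d (insp v c L) = Qd u d L"
proof (induction L)
  case Nil then show ?case by auto
next
  case (Cons x L)
  obtain s h where x: "x = (s, h)" by fastforce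
  have "v \<noteq> u" using Cons.prems by auto
  then show ?case using Cons x by auto
qed

lemma Qd_ins: "(v, u) \<in> E \<Longrightarrow> Qd u d (ins v c L) = Qd u d L"
  unfolding ins_def using Qd_insp by simp

lemma Qd_ins_d:
  assumes uV: "u \<in> V" and d: "d \<in> carrier (C u)" "d \<notin> Units (C u)"
  shows "wf L \<Longrightarrow> Qd u d (ins u d L)"
proof -
  interpret monoid "C u" using mon uV .
  have d1: "d \<noteq> \<one>\<^bsub>C u\<^esub>" using d by auto
  show "wf L \<Longrightarrow> Qd u d (ins u d L)"
  proof (induction L)
    case Nil then show ?case using d d1 by (auto simp: ins_def intro!: bexI[of _ "\<one>\<^bsub>C u\<^esub>"])
  next
    case (Cons x L)
    obtain s h where x: "x = (s, h)" by fastforce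
    have w: "wf L" "s \<in> V" "h \<in> carrier (C s)" "h \<noteq> \<one>\<^bsub>C s\<^esub>" using Cons.prems x by (auto simp: wf_def)
    show ?case
    proof (cases "s = u")
      case True
      have "h \<otimes>\<^bsub>C u\<^esub> d \<noteq> \<one>\<^bsub>C u\<^esub>" using unit_right[OF uV] w True d by blast
      then show ?thesis using True x w d1 by (auto simp: ins_def)
    next
      case False
      show ?thesis
      proof (cases "(s, u) \<in> E")
        case True
        then show ?thesis using Cons.IH[OF w(1)] False x d1 by (simp add: ins_def)
      next
        case f2: False
        then show ?thesis using False x d d1 by (auto simp: ins_def intro!: bexI[of _ "\<one>\<^bsub>C u\<^esub>"])
      qed
    qed
  qed
qed

lemma Qd_extract:
  assumes uV: "u \<in> V" and d: "d \<in> carrier (C u)"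
  shows "wf L \<Longrightarrow> Qd u d L \<Longrightarrow> \<exists>z. z \<in> W \<and> geq (rev L) (z @ [(u, d)])"
proof (induction L)
  case Nil then show ?case by simp
next
  case (Cons x L)
  obtain s h where x: "x = (s, h)" by fastforce
  have w: "wf L" "s \<in> V" "h \<in> carrier (C s)" using Cons.prems x by (auto simp: wf_def)
  have rw: "rev L \<in> W" using wf_words w(1) .
  from Cons.prems x consider "s = u" "\<exists>k \<in> carrier (C u). h = k \<otimes>\<^bsub>C u\<^esub> d" | "(s, u) \<in> E" "Qd u d L"
    by auto
  then show ?case
  proof cases
    case 1
    then obtain k where k: "k \<in> carrier (C u)" "h = k \<otimes>\<^bsub>C u\<^esub> d" by blast
    have "geq (rev L @ [(u, k), (u, d)] @ []) (rev L @ [(u, k \<otimes>\<^bsub>C u\<^esub> d)] @ [])"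
      using gp_mult[where xs="rev L" and ys="[]" and v=u and a=k and b=d] rw uV k d by simp
    then have "geq (rev (x # L)) ((rev L @ [(u, k)]) @ [(u, d)])"
      using x 1 k by (simp add: gp_sym)
    then show ?thesis using rw uV k by (intro exI[of _ "rev L @ [(u, k)]"]) simp
  next
    case 2
    obtain z where z: "z \<in> W" "geq (rev L) (z @ [(u, d)])" using Cons.IH[OF w(1) 2(2)] by blast
    have 3: "geq (rev L @ [(s, h)]) (z @ [(u, d)] @ [(s, h)])"
      using geq_app_right[OF z(2)] w by simp
    have 4: "geq (z @ [(u, d), (s, h)] @ []) (z @ [(s, h), (u, d)] @ [])"
      using gp_comm[where xs=z and ys="[]" and u=u and v=s and a=d and b=h] z w d Esym[OF 2(1)] by simp
    have "geq (rev (x # L)) ((z @ [(s, h)]) @ [(u, d)])"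
      using gp_trans[OF 3] 4 x by simp
    then show ?thesis using z w by (intro exI[of _ "z @ [(s, h)]"]) simp
  qed
qed

lemma core:
  assumes uv: "(u, v) \<in> E" and c: "c \<in> carrier (C v)"
    and d: "d \<in> carrier (C u)" "d \<notin> Units (C u)"
    and x: "x \<in> W" and y: "y \<in> W"
    and eq: "geq (x @ [(v, c)]) (y @ [(u, d)])"
  shows "\<exists>z. z \<in> W \<and> geq x (z @ [(u, d)])"
proof -
  have uV: "u \<in> V" and vV: "v \<in> V" using EV uv by auto
  have t: "tr (ins v c (nf x)) (ins u d (nf y))" using nf_tr[OF eq] by simp
  have "Qd u d (ins u d (nf y))" using Qd_ins_d[OF uV d] nf_inv y by blast
  then have "Qd u d (ins v c (nf x))" using Qd_tr[OF t] by simp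
  then have q: "Qd u d (nf x)" using Qd_ins Esym[OF uv] by simp
  obtain z where z: "z \<in> W" "geq (rev (nf x)) (z @ [(u, d)])"
    using Qd_extract[OF uV d(1)] q nf_inv x by blast
  show ?thesis using z gp_trans[OF nf_geq[OF x] z(2)] by blast
qed

abbreviation "R \<equiv> gp_rel C V E"
abbreviation "G \<equiv> graph_product C V E"

lemma R_img: "R `` {w} = {w'. geq w w'}"
  unfolding gp_rel_def by auto

lemma class_eq: "w \<in> W \<Longrightarrow> R `` {w} = R `` {w'} \<longleftrightarrow> geq w w'"
proof
  assume a: "w \<in> W" "R `` {w} = R `` {w'}"
  have "geq w w" using a(1) by (rule gp_refl)
  then have "w \<in> R `` {w}" using R_img by auto
  then have "w \<in> R `` {w'}" using a(2) by simp
  then have "geq w' w" using R_img by auto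
  then show "geq w w'" by (rule gp_sym)
next
  assume "geq w w'"
  then show "R `` {w} = R `` {w'}" unfolding R_img by (auto intro: gp_trans gp_sym)
qed

lemma mult_cls: assumes "a \<in> W" "b \<in> W"
  shows "R `` {a} \<otimes>\<^bsub>G\<^esub> R `` {b} = R `` {a @ b}"
proof -
  have "R `` {x @ y} = R `` {a @ b}" if "x \<in> R `` {a}" "y \<in> R `` {b}" for x y
  proof -
    have "geq a x" "geq b y" using that R_img by auto
    then have "geq (a @ b) (x @ y)" by (rule geq_app)
    then have "R `` {a @ b} = R `` {x @ y}" using class_eq[of "a @ b" "x @ y"] assms by simp
    then show ?thesis by simp
  qed
  note H = this
  have "geq a a" "geq b b" using assms by (auto intro: gp_refl)
  then have ne: "R `` {a} \<noteq> {}" "R `` {b} \<noteq> {}" using R_img by auto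
  have "R `` {a} \<otimes>\<^bsub>G\<^esub> R `` {b} = (\<Union>x\<in>R `` {a}. \<Union>y\<in>R `` {b}. R `` {x @ y})"
    by (simp add: graph_product_def)
  also have "\<dots> = (\<Union>x\<in>R `` {a}. \<Union>y\<in>R `` {b}. R `` {a @ b})"
    using H by (intro SUP_cong refl) blast
  also have "\<dots> = R `` {a @ b}" using ne by simp
  finally show ?thesis .
qed

lemma carrier_cls: "X \<in> carrier G \<Longrightarrow> \<exists>x. x \<in> W \<and> X = R `` {x}"
  unfolding graph_product_def by (auto elim!: quotientE)

lemma cls_carrier: "x \<in> W \<Longrightarrow> R `` {x} \<in> carrier G"
  unfolding graph_product_def by (simp add: quotientI)

lemma main:
  assumes uv: "(u, v) \<in> E" and c: "c \<in> carrier (C v)"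
    and d: "d \<in> carrier (C u)" "d \<notin> Units (C u)"
  shows "(\<lambda>x. x \<otimes>\<^bsub>G\<^esub> gp_inj C V E v c) ` carrier G
       \<inter> (\<lambda>x. x \<otimes>\<^bsub>G\<^esub> gp_inj C V E u d) ` carrier G
       = (\<lambda>x. x \<otimes>\<^bsub>G\<^esub> (gp_inj C V E v c \<otimes>\<^bsub>G\<^esub> gp_inj C V E u d)) ` carrier G"
proof -
  have uV: "u \<in> V" and vV: "v \<in> V" using EV uv by auto
  have wc: "[(v, c)] \<in> W" and wd: "[(u, d)] \<in> W" using uV vV c d by auto
  have cd: "gp_inj C V E v c \<otimes>\<^bsub>G\<^esub> gp_inj C V E u d = R `` {[(v, c), (u, d)]}"
    unfolding gp_inj_def using mult_cls[OF wc wd] by simp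
  have comm: "geq (z @ [(u, d), (v, c)]) (z @ [(v, c), (u, d)])" if "z \<in> W" for z
    using gp_comm[where xs=z and ys="[]" and u=u and v=v and a=d and b=c] that uv c d by simp
  show ?thesis
  proof (intro equalityI subsetI)
      fix X assume "X \<in> (\<lambda>x. x \<otimes>\<^bsub>G\<^esub> gp_inj C V E v c) ` carrier G
       \<inter> (\<lambda>x. x \<otimes>\<^bsub>G\<^esub> gp_inj C V E u d) ` carrier G"
      then obtain X1 Y1 where X1: "X1 \<in> carrier G" "X = X1 \<otimes>\<^bsub>G\<^esub> gp_inj C V E v c"
        and Y1: "Y1 \<in> carrier G" "X = Y1 \<otimes>\<^bsub>G\<^esub> gp_inj C V E u d" by blast
      obtain x where x: "x \<in> W" "X1 = R `` {x}" using carrier_cls X1 by blast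
      obtain y where y: "y \<in> W" "Y1 = R `` {y}" using carrier_cls Y1 by blast
      have "R `` {x @ [(v, c)]} = R `` {y @ [(u, d)]}"
        using X1(2) Y1(2) x(2) y(2) mult_cls[OF x(1) wc] mult_cls[OF y(1) wd] unfolding gp_inj_def by simp
      moreover have xvW: "x @ [(v, c)] \<in> W" using x wc by simp
      ultimately have "geq (x @ [(v, c)]) (y @ [(u, d)])" using iffD1[OF class_eq[OF xvW, of "y @ [(u, d)]"]] by blast
      then obtain z where z: "z \<in> W" "geq x (z @ [(u, d)])" using core[OF uv c d x(1) y(1)] by blast
      have "geq (x @ [(v, c)]) (z @ [(u, d)] @ [(v, c)])" using geq_app_right[OF z(2) wc] by simp
      then have "geq (x @ [(v, c)]) (z @ [(v, c), (u, d)])" using gp_trans[OF _ comm[OF z(1)]] by simp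
      then have "R `` {x @ [(v, c)]} = R `` {z @ [(v, c), (u, d)]}"
        using iffD2[OF class_eq[OF xvW, of "z @ [(v, c), (u, d)]"]] by blast
      moreover have "X = R `` {x @ [(v, c)]}" using X1(2) x(2) mult_cls[OF x(1) wc] unfolding gp_inj_def by simp
      moreover have "R `` {z} \<otimes>\<^bsub>G\<^esub> R `` {[(v, c), (u, d)]} = R `` {z @ [(v, c), (u, d)]}"
        using mult_cls[OF z(1)] wc wd by simp
      ultimately have "X = R `` {z} \<otimes>\<^bsub>G\<^esub> (gp_inj C V E v c \<otimes>\<^bsub>G\<^esub> gp_inj C V E u d)"
        using cd by simp
      then show "X \<in> (\<lambda>x. x \<otimes>\<^bsub>G\<^esub> (gp_inj C V E v c \<otimes>\<^bsub>G\<^esub> gp_inj C V E u d)) ` carrier G"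
        using cls_carrier[OF z(1)] by blast
  next
      fix X assume "X \<in> (\<lambda>x. x \<otimes>\<^bsub>G\<^esub> (gp_inj C V E v c \<otimes>\<^bsub>G\<^esub> gp_inj C V E u d)) ` carrier G"
      then obtain X1 where X1: "X1 \<in> carrier G" "X = X1 \<otimes>\<^bsub>G\<^esub> (gp_inj C V E v c \<otimes>\<^bsub>G\<^esub> gp_inj C V E u d)"
        by blast
      obtain x where x: "x \<in> W" "X1 = R `` {x}" using carrier_cls X1 by blast
      have wcd: "[(v, c), (u, d)] \<in> W" using wc wd by simp
      have X: "X = R `` {x @ [(v, c), (u, d)]}" using X1 x cd mult_cls[OF x(1) wcd] by simp
      have xv: "x @ [(v, c)] \<in> W" and xu: "x @ [(u, d)] \<in> W" using x wc wd by simp_all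
      have 1: "X = R `` {x @ [(v, c)]} \<otimes>\<^bsub>G\<^esub> gp_inj C V E u d"
        using X mult_cls[OF xv wd] unfolding gp_inj_def by simp
      have "R `` {x @ [(u, d)] @ [(v, c)]} = R `` {x @ [(v, c), (u, d)]}"
        using comm[OF x(1)] iffD2[OF class_eq[of "x @ [(u, d)] @ [(v, c)]" "x @ [(v, c), (u, d)]"]] xu wc by simp
      then have 2: "X = R `` {x @ [(u, d)]} \<otimes>\<^bsub>G\<^esub> gp_inj C V E v c"
        using X mult_cls[OF xu wc] unfolding gp_inj_def by simp
      show "X \<in> (\<lambda>x. x \<otimes>\<^bsub>G\<^esub> gp_inj C V E v c) ` carrier G
       \<inter> (\<lambda>x. x \<otimes>\<^bsub>G\<^esub> gp_inj C V E u d) ` carrier G"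
        using 1 2 cls_carrier[OF xv] cls_carrier[OF xu] by blast
  qed
qed

end

theorem lemma2p5:
  fixes C :: "'v \<Rightarrow> 'a monoid" and V :: "'v set" and E :: "('v \<times> 'v) set"
  assumes "is_graph V E"
    and "\<And>v. v \<in> V \<Longrightarrow> right_cancellative_monoid (C v)"
    and "(u, v) \<in> E"
    and "c \<in> carrier (C v)" and "c \<notin> Units (C v)"
    and "d \<in> carrier (C u)" and "d \<notin> Units (C u)"
  shows "(\<lambda>x. x \<otimes>\<^bsub>graph_product C V E\<^esub> gp_inj C V E v c) ` carrier (graph_product C V E)
       \<inter> (\<lambda>x. x \<otimes>\<^bsub>graph_product C V E\<^esub> gp_inj C V E u d) ` carrier (graph_product C V E)
       = (\<lambda>x. x \<otimes>\<^bsub>graph_product C V E\<^esub>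
               (gp_inj C V E v c \<otimes>\<^bsub>graph_product C V E\<^esub> gp_inj C V E u d))
           ` carrier (graph_product C V E)"
proof -
  interpret GP C V E using assms(1,2) by (unfold_locales) auto
  show ?thesis using main[OF assms(3,4,6,7)] .
qed

end
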